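(* Fix $A,b,c$ and a base sequence $(B_1,\dots,B_N;\mathcal{K}_0,\mathcal{J}_0,\mathcal{K}_{N+1},\mathcal{J}_{N+1})$. Its validity region $\mathcal{T}$, i.e. the set of all $(\beta,\gamma,T)\in\mathbb{R}^K\times\mathbb{R}^J\times[0,\infty)$ for which the base sequence is optimal, is a convex polyhedral cone.
   Context: Let $A$ be a real $K\times J$ matrix, $b\in\mathbb{R}^K$, $c\in\mathbb{R}^J$; the remaining data of M-CLP are $\beta\in\mathbb{R}^K$, $\gamma\in\mathbb{R}^J$ and the horizon $T$. (M-CLP: maximize $\int_{0-}^T(\gamma+(T-t)c)^\top dU(t)$ over nonnegative, non-decreasing, right-continuous $U$ with $U(0-)=0$ subject to $AU(t)\le\beta+bt$, $0\le t\le T$; M-CLP$^*$: minimize $\int_{0-}^T(\beta+(T-t)b)^\top dP(t)$ over nonnegative non-decreasing right-continuous $P$, $P(0-)=0$, subject to $A^\top P(t)\ge\gamma+ct$.) Bases: index sets $\mathcal{K}\subseteq\{1..K\},\mathcal{J}\subseteq\{1..J\}$ such that $\dot x_k$ ($k\in\mathcal{K}$), $u_j$ ($j\notin\mathcal{J}$) are $K$ variables with independent columns in $[A\ I]$; primal basic solution solves $Au+\dot x=b$ with $u_j=0$ ($j\in\mathcal{J}$), $\dot x_k=0$ ($k\notin\mathcal{K}$); dual basic solution solves $A^\top p-\dot q=c$ with $p_k=0$ ($k\in\mathcal{K}$), $\dot q_j=0$ ($j\notin\mathcal{J}$). Admissible: $u,p\ge0$. Adjacent: one pivot apart, primal variable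 $v_n$ leaving from $B_n$ to $B_{n+1}$. A base sequence consists of admissible, consecutively adjacent bases $B_1..B_N$ (index sets $\mathcal{K}_n,\mathcal{J}_n$, rates $u^n,\dot x^n,p^n,\dot q^n$) plus index sets $\mathcal{K}_0,\mathcal{J}_0,\mathcal{K}_{N+1},\mathcal{J}_{N+1}$ with $\mathcal{K}_0\subseteq\mathcal{K}_1$, $\mathcal{J}_{N+1}\subseteq\mathcal{J}_N$ (these depend only on $A,b,c$). The base-sequence system for data $(\beta,\gamma,T)$ in unknowns $\mathbf{u}^0,\mathbf{u}^N,q^N,\mathbf{q}^0\in\mathbb{R}^J$, $x^0,\mathbf{x}^N,\mathbf{p}^0,\mathbf{p}^N\in\mathbb{R}^K$, $\tau_1..\tau_N$, with $x^n=x^0+\sum_{m\le n}\dot x^m\tau_m$, $q^n=q^N+\sum_{m>n}\dot q^m\tau_m$, is: (a) $x^n_k=0$ if $v_n=\dot x_k$, $q^n_j=0$ if $v_n=u_j$ ($n=1..N-1$); (b) $\sum\tau_n=T$; (c) $\mathbf{u}^0_j=0$ ($j\in\mathcal{J}_0$), $x^0_k=0$ ($k\notin\mathcal{K}_0$), $\mathbf{p}^0_k=0$ ($k\in\mathcal{K}_0$), $\mathbf{q}^0_j=0$ ($j\notin\mathcal{J}_0$), $\mathbf{p}^N_k=0$ ($k\in\mathcal{K}_{N+1}$), $q^N_j=0$ ($j\notin\mathcal{J}_{N+1}$), $\mathbf{u}^N_j=0$ ($j\in\mathcal{J}_{N+1}$), $\mathbf{x}^N_k=0$ ($k\notin\mathcal{K}_{N+1}$);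 (d) $A\mathbf{u}^0+x^0=\beta$, $A^\top\mathbf{p}^N-q^N=\gamma$; (e) $A\mathbf{u}^N+\mathbf{x}^N-x^N=0$, $A^\top\mathbf{p}^0-\mathbf{q}^0+q^0=0$. The base sequence is optimal for $(\beta,\gamma,T)$ if this system has a solution in which all boundary values, all $\tau_n$, and all $x^n,q^n$ ($n=0..N$) are nonnegative. *)

theory Defs
  imports "HOL-Analysis.Analysis"
begin

text \<open>Primal variables of a basis are encoded as ('k + 'j):
  Inl k stands for the slack rate xdot_k, Inr j for u_j.\<close>

definition basic_vars :: "'k set \<Rightarrow> 'j set \<Rightarrow> ('k + 'j) set" where
  "basic_vars Ks Js = Inl ` Ks \<union> Inr ` (- Js)"

definition is_basis :: "real^'j::finite^'k::finite \<Rightarrow> 'k set \<Rightarrow> 'j set \<Rightarrow> bool" where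
  "is_basis A Ks Js \<longleftrightarrow>
     card Ks + card (- Js) = CARD('k) \<and>
     (\<forall>(a::'k \<Rightarrow> real) (w::'j \<Rightarrow> real).
        (\<Sum>k\<in>Ks. a k *s axis k (1::real)) + (\<Sum>j\<in>- Js. w j *s column j A) = 0 \<longrightarrow>
        (\<forall>k\<in>Ks. a k = 0) \<and> (\<forall>j\<in>- Js. w j = 0))"

definition primal_basic_sol ::
  "real^'j::finite^'k::finite \<Rightarrow> real^'k \<Rightarrow> 'k set \<Rightarrow> 'j set \<Rightarrow> real^'j \<Rightarrow> real^'k \<Rightarrow> bool" where
  "primal_basic_sol A b Ks Js u xd \<longleftrightarrow>
     A *v u + xd = b \<and> (\<forall>j\<in>Js. u $ j = 0) \<and> (\<forall>k. k \<notin> Ks \<longrightarrow> xd $ k = 0)"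

definition dual_basic_sol ::
  "real^'j::finite^'k::finite \<Rightarrow> real^'j \<Rightarrow> 'k set \<Rightarrow> 'j set \<Rightarrow> real^'k \<Rightarrow> real^'j \<Rightarrow> bool" where
  "dual_basic_sol A c Ks Js p qd \<longleftrightarrow>
     transpose A *v p - qd = c \<and> (\<forall>k\<in>Ks. p $ k = 0) \<and> (\<forall>j. j \<notin> Js \<longrightarrow> qd $ j = 0)"

definition base_sequence ::
  "real^'j::finite^'k::finite \<Rightarrow> real^'k \<Rightarrow> real^'j \<Rightarrow> nat \<Rightarrow> (nat \<Rightarrow> 'k set) \<Rightarrow> (nat \<Rightarrow> 'j set)
   \<Rightarrow> (nat \<Rightarrow> real^'j) \<Rightarrow> (nat \<Rightarrow> real^'k) \<Rightarrow> (nat \<Rightarrow> real^'k) \<Rightarrow> (nat \<Rightarrow> real^'j) \<Rightarrow> bool" where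
  "base_sequence A b c N Ks Js u xd p qd \<longleftrightarrow>
     1 \<le> N \<and>
     (\<forall>n\<in>{1..N}. is_basis A (Ks n) (Js n) \<and>
        primal_basic_sol A b (Ks n) (Js n) (u n) (xd n) \<and>
        dual_basic_sol A c (Ks n) (Js n) (p n) (qd n) \<and>
        (\<forall>j. 0 \<le> u n $ j) \<and> (\<forall>k. 0 \<le> p n $ k)) \<and>
     (\<forall>n\<in>{1..<N}. card (basic_vars (Ks n) (Js n) - basic_vars (Ks (Suc n)) (Js (Suc n))) = 1) \<and>
     Ks 0 \<subseteq> Ks 1 \<and> Js (N + 1) \<subseteq> Js N"

definition xtraj :: "real^'k::finite \<Rightarrow> (nat \<Rightarrow> real^'k) \<Rightarrow> (nat \<Rightarrow> real) \<Rightarrow> nat \<Rightarrow> real^'k" where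
  "xtraj x0 xd \<tau> n = x0 + (\<Sum>m\<in>{1..n}. \<tau> m *\<^sub>R xd m)"

definition qtraj :: "real^'j::finite \<Rightarrow> (nat \<Rightarrow> real^'j) \<Rightarrow> (nat \<Rightarrow> real) \<Rightarrow> nat \<Rightarrow> nat \<Rightarrow> real^'j" where
  "qtraj qN qd \<tau> N n = qN + (\<Sum>m\<in>{n<..N}. \<tau> m *\<^sub>R qd m)"

definition base_seq_optimal ::
  "real^'j::finite^'k::finite \<Rightarrow> nat \<Rightarrow> (nat \<Rightarrow> 'k set) \<Rightarrow> (nat \<Rightarrow> 'j set)
   \<Rightarrow> (nat \<Rightarrow> real^'k) \<Rightarrow> (nat \<Rightarrow> real^'j) \<Rightarrow> real^'k \<Rightarrow> real^'j \<Rightarrow> real \<Rightarrow> bool" where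
  "base_seq_optimal A N Ks Js xd qd \<beta> \<gamma> T \<longleftrightarrow>
     (\<exists>(bu0::real^'j) (buN::real^'j) (qN::real^'j) (bq0::real^'j)
        (x0::real^'k) (bxN::real^'k) (bp0::real^'k) (bpN::real^'k) (\<tau>::nat \<Rightarrow> real).
       \<comment> \<open>(a)\<close>
       (\<forall>n\<in>{1..<N}.
          (\<forall>k. Inl k \<in> basic_vars (Ks n) (Js n) - basic_vars (Ks (Suc n)) (Js (Suc n))
                \<longrightarrow> xtraj x0 xd \<tau> n $ k = 0) \<and>
          (\<forall>j. Inr j \<in> basic_vars (Ks n) (Js n) - basic_vars (Ks (Suc n)) (Js (Suc n))
                \<longrightarrow> qtraj qN qd \<tau> N n $ j = 0)) \<and>
       \<comment> \<open>(b)\<close>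
       (\<Sum>n\<in>{1..N}. \<tau> n) = T \<and>
       \<comment> \<open>(c)\<close>
       (\<forall>j\<in>Js 0. bu0 $ j = 0) \<and> (\<forall>k. k \<notin> Ks 0 \<longrightarrow> x0 $ k = 0) \<and>
       (\<forall>k\<in>Ks 0. bp0 $ k = 0) \<and> (\<forall>j. j \<notin> Js 0 \<longrightarrow> bq0 $ j = 0) \<and>
       (\<forall>k\<in>Ks (N + 1). bpN $ k = 0) \<and> (\<forall>j. j \<notin> Js (N + 1) \<longrightarrow> qN $ j = 0) \<and>
       (\<forall>j\<in>Js (N + 1). buN $ j = 0) \<and> (\<forall>k. k \<notin> Ks (N + 1) \<longrightarrow> bxN $ k = 0) \<and>
       \<comment> \<open>(d)\<close>
       A *v bu0 + x0 = \<beta> \<and> transpose A *v bpN - qN = \<gamma> \<and>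
       \<comment> \<open>(e)\<close>
       A *v buN + bxN - xtraj x0 xd \<tau> N = 0 \<and>
       transpose A *v bp0 - bq0 + qtraj qN qd \<tau> N 0 = 0 \<and>
       \<comment> \<open>nonnegativity\<close>
       (\<forall>j. 0 \<le> bu0 $ j \<and> 0 \<le> buN $ j \<and> 0 \<le> bq0 $ j) \<and>
       (\<forall>k. 0 \<le> bxN $ k \<and> 0 \<le> bp0 $ k \<and> 0 \<le> bpN $ k) \<and>
       (\<forall>n\<in>{1..N}. 0 \<le> \<tau> n) \<and>
       (\<forall>n\<le>N. (\<forall>k. 0 \<le> xtraj x0 xd \<tau> n $ k) \<and> (\<forall>j. 0 \<le> qtraj qN qd \<tau> N n $ j)))"

definition validity_region ::
  "real^'j::finite^'k::finite \<Rightarrow> nat \<Rightarrow> (nat \<Rightarrow> 'k set) \<Rightarrow> (nat \<Rightarrow> 'j set)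
   \<Rightarrow> (nat \<Rightarrow> real^'k) \<Rightarrow> (nat \<Rightarrow> real^'j) \<Rightarrow> ((real^'k) \<times> (real^'j) \<times> real) set" where
  "validity_region A N Ks Js xd qd =
     {(\<beta>, \<gamma>, T). 0 \<le> T \<and> base_seq_optimal A N Ks Js xd qd \<beta> \<gamma> T}"

end

theory Submission
  imports Defs
begin


definition lin :: "'i set \<Rightarrow> ('a::real_vector \<Rightarrow> ('i \<Rightarrow> real) \<Rightarrow> real) \<Rightarrow> bool" where
 "lin I g \<longleftrightarrow> (\<forall>y t t'. (\<forall>i\<in>I. t i = t' i) \<longrightarrow> g y t = g y t') \<and>
   (\<forall>y1 y2 t1 t2. g (y1 + y2) (\<lambda>i. t1 i + t2 i) = g y1 t1 + g y2 t2) \<and>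
   (\<forall>r y t. g (r *\<^sub>R y) (\<lambda>i. r * t i) = r * g y t)"

definition Sys :: "('a \<Rightarrow> ('i\<Rightarrow>real) \<Rightarrow> real) set \<Rightarrow> 'a set" where
  "Sys F = {y. \<exists>t. \<forall>g\<in>F. g y t \<le> 0}"

lemma lin_indep: "lin I g \<Longrightarrow> (\<And>i. i \<in> I \<Longrightarrow> t i = t' i) \<Longrightarrow> g y t = g y t'"
  unfolding lin_def by blast
lemma lin_add': "lin I g \<Longrightarrow> g (y1 + y2) (\<lambda>i. t1 i + t2 i) = g y1 t1 + g y2 t2"
  unfolding lin_def by blast
lemma lin_hom: "lin I g \<Longrightarrow> g (r *\<^sub>R y) (\<lambda>i. r * t i) = r * g y t"
  unfolding lin_def by blast

lemma lin_zero: "lin I g \<Longrightarrow> g 0 (\<lambda>i. 0) = 0"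
  using lin_hom[of I g 0 0 "\<lambda>i. 0"] by simp

lemma lin_decomp:
  assumes "lin I g"
  shows "g y t = g y (t(i:=0)) + t i * g 0 (\<lambda>j. if j = i then 1 else 0)"
proof -
  have e: "(\<lambda>j. (t(i:=0)) j + t i * (if j = i then 1 else 0)) = t" by (auto simp: fun_eq_iff)
  have "g (y + 0) (\<lambda>j. (t(i:=0)) j + t i * (if j = i then 1 else 0))
     = g y (t(i:=0)) + g 0 (\<lambda>j. t i * (if j = i then 1 else 0))"
    by (rule lin_add'[OF assms])
  moreover have "g (t i *\<^sub>R 0) (\<lambda>j. t i * (if j = i then 1 else 0)) = t i * g 0 (\<lambda>j. if j = i then 1 else 0)"
    by (rule lin_hom[OF assms])
  ultimately show ?thesis using e by simp
qed

lemma lin_restr: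
  fixes g :: "'a::real_vector \<Rightarrow> ('i \<Rightarrow> real) \<Rightarrow> real"
  assumes "lin (insert i I) g"
  shows "lin I (\<lambda>y t. g y (t(i:=0)))"
  unfolding lin_def
proof (intro conjI allI impI)
  fix y and t t' :: "'i \<Rightarrow> real" assume "\<forall>j\<in>I. t j = t' j"
  then show "g y (t(i:=0)) = g y (t'(i:=0))"
    by (intro lin_indep[OF assms]) auto
next
  fix y1 y2 and t1 t2 :: "'i \<Rightarrow> real"
  have eqq: "(\<lambda>j. t1 j + t2 j)(i:=0) = (\<lambda>j. (t1(i:=0)) j + (t2(i:=0)) j)" by (auto simp: fun_eq_iff)
  then show "g (y1 + y2) ((\<lambda>j. t1 j + t2 j)(i:=0)) = g y1 (t1(i:=0)) + g y2 (t2(i:=0))"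
    by (subst eqq) (rule lin_add'[OF assms])
next
  fix r y and t :: "'i \<Rightarrow> real"
  have eqq: "(\<lambda>j. r * t j)(i:=0) = (\<lambda>j. r * (t(i:=0)) j)" by (auto simp: fun_eq_iff)
  then show "g (r *\<^sub>R y) ((\<lambda>j. r * t j)(i:=0)) = r * g y (t(i:=0))"
    by (subst eqq) (rule lin_hom[OF assms])
qed

lemma lin_intro:
  assumes "\<And>y t t'. (\<forall>i\<in>I. t i = t' i) \<Longrightarrow> g y t = g y t'"
    "\<And>y1 y2 t1 t2. g (y1 + y2) (\<lambda>i. t1 i + t2 i) = g y1 t1 + g y2 t2"
    "\<And>r y t. g (r *\<^sub>R y) (\<lambda>i. r * t i) = r * g y t"
  shows "lin I g"
  unfolding lin_def using assms by blast

lemma lin_add: fixes g h :: "'a::real_vector \<Rightarrow> ('i \<Rightarrow> real) \<Rightarrow> real" assumes "lin I g" "lin I h" shows "lin I (\<lambda>y t. g y t + h y t)"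
proof (rule lin_intro)
  fix y and t t' :: "'i \<Rightarrow> real" assume "\<forall>i\<in>I. t i = t' i"
  then show "g y t + h y t = g y t' + h y t'"
    using lin_indep[OF assms(1), of t t' y] lin_indep[OF assms(2), of t t' y] by simp
qed (simp_all add: lin_add'[OF assms(1)] lin_add'[OF assms(2)] lin_hom[OF assms(1)] lin_hom[OF assms(2)] algebra_simps)

lemma lin_minus: fixes g h :: "'a::real_vector \<Rightarrow> ('i \<Rightarrow> real) \<Rightarrow> real" assumes "lin I g" shows "lin I (\<lambda>y t. - g y t)"
proof (rule lin_intro)
  fix y and t t' :: "'i \<Rightarrow> real" assume "\<forall>i\<in>I. t i = t' i"
  then show "- g y t = - g y t'"
    using lin_indep[OF assms(1), of t t' y] by simp
qed (simp_all add: lin_add'[OF assms(1)] lin_hom[OF assms(1)] algebra_simps)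

lemma lin_cmult: fixes g h :: "'a::real_vector \<Rightarrow> ('i \<Rightarrow> real) \<Rightarrow> real" assumes "lin I g" shows "lin I (\<lambda>y t. c * g y t)"
proof (rule lin_intro)
  fix y and t t' :: "'i \<Rightarrow> real" assume "\<forall>i\<in>I. t i = t' i"
  then show "c * g y t = c * g y t'"
    using lin_indep[OF assms(1), of t t' y] by simp
qed (simp_all add: lin_add'[OF assms(1)] lin_hom[OF assms(1)] algebra_simps)

lemma lin_diff: assumes "lin I g" "lin I h" shows "lin I (\<lambda>y t. g y t - h y t)"
  using lin_add[OF assms(1) lin_minus[OF assms(2)]] by simp

lemma lin_multc: assumes "lin I g" shows "lin I (\<lambda>y t. g y t * c)"
  using lin_cmult[OF assms, of c] by (simp add: mult.commute)

lemma lin_var: "i \<in> I \<Longrightarrow> lin I (\<lambda>y t. t i)"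
  unfolding lin_def by simp
lemma lin_const0: "lin I (\<lambda>y t. 0)"
  unfolding lin_def by simp
lemma lin_sum: "finite S \<Longrightarrow> (\<And>s. s \<in> S \<Longrightarrow> lin I (g s)) \<Longrightarrow> lin I (\<lambda>y t. \<Sum>s\<in>S. g s y t)"
proof (induction S rule: finite_induct)
  case empty then show ?case by (simp add: lin_const0)
next
  case (insert x F)
  then show ?case by (simp add: lin_add)
qed

lemma lin_base:
  fixes g :: "'a::euclidean_space \<Rightarrow> ('i \<Rightarrow> real) \<Rightarrow> real"
  assumes "lin I g"
  shows "\<exists>a. \<forall>y. g y (\<lambda>_. 0) = a \<bullet> y"
proof -
  define f where "f y = g y (\<lambda>_. 0)" for y
  have lf: "linear f"
  proof (rule linearI)
    fix x y show "f (x + y) = f x + f y"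
      using lin_add'[OF assms, of x y "\<lambda>_. 0" "\<lambda>_. 0"] by (simp add: f_def)
  next
    fix r x show "f (r *\<^sub>R x) = r *\<^sub>R f x"
      using lin_hom[OF assms, of r x "\<lambda>_. 0"] by (simp add: f_def)
  qed
  have "f y = (\<Sum>b\<in>Basis. f b *\<^sub>R b) \<bullet> y" for y
  proof -
    have "f y = f (\<Sum>b\<in>Basis. (y \<bullet> b) *\<^sub>R b)" by (simp add: euclidean_representation)
    also have "\<dots> = (\<Sum>b\<in>Basis. (y \<bullet> b) * f b)"
      by (simp add: linear_sum[OF lf] linear_scale[OF lf])
    also have "\<dots> = (\<Sum>b\<in>Basis. f b *\<^sub>R b) \<bullet> y"
      by (simp add: inner_sum_right inner_commute mult.commute)
    finally show ?thesis .
  qed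
  then show ?thesis unfolding f_def by blast
qed

lemma Sys_base:
  fixes F :: "('a::euclidean_space \<Rightarrow> ('i \<Rightarrow> real) \<Rightarrow> real) set"
  assumes "finite F" "\<forall>g\<in>F. lin {} g"
  shows "polyhedron (Sys F)"
proof -
  have "Sys F = \<Inter> ((\<lambda>g. {y. g y (\<lambda>_. 0) \<le> 0}) ` F)"
  proof
    show "Sys F \<subseteq> \<Inter> ((\<lambda>g. {y. g y (\<lambda>_. 0) \<le> 0}) ` F)"
    proof
      fix y assume "y \<in> Sys F"
      then obtain t where t: "\<forall>g\<in>F. g y t \<le> 0" by (auto simp: Sys_def)
      have "g y (\<lambda>_. 0) \<le> 0" if "g \<in> F" for g
        using t that lin_indep[of "{}" g t "\<lambda>_. 0" y] assms(2) by auto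
      then show "y \<in> \<Inter> ((\<lambda>g. {y. g y (\<lambda>_. 0) \<le> 0}) ` F)" by auto
    qed
  next
    show "\<Inter> ((\<lambda>g. {y. g y (\<lambda>_. 0) \<le> 0}) ` F) \<subseteq> Sys F"
      by (auto simp: Sys_def)
  qed
  moreover have "polyhedron {y. g y (\<lambda>_. 0) \<le> 0}" if gF: "g \<in> F" for g
  proof -
    have "lin {} g" using assms(2) gF by blast
    then obtain a where "\<forall>y. g y (\<lambda>_. 0) = a \<bullet> y" using lin_base by blast
    then show ?thesis using polyhedron_halfspace_le[of a 0] by simp
  qed
  ultimately show ?thesis using assms(1) by (auto intro!: polyhedron_Inter)
qed

lemma Sys_step:
  fixes F :: "('a::euclidean_space \<Rightarrow> ('i \<Rightarrow> real) \<Rightarrow> real) set"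
  assumes fin: "finite F" and L: "\<forall>g\<in>F. lin (insert i I) g"
  shows "\<exists>F'. finite F' \<and> (\<forall>g\<in>F'. lin I g) \<and> Sys F' = Sys F"
proof -
  define e where "e = (\<lambda>j::'i. if j = i then (1::real) else 0)"
  define \<kappa> where "\<kappa> g = g 0 e" for g :: "'a \<Rightarrow> ('i \<Rightarrow> real) \<Rightarrow> real"
  define r where "r g = (\<lambda>y t. g y (t(i:=0)))" for g :: "'a \<Rightarrow> ('i \<Rightarrow> real) \<Rightarrow> real"
  define cmb where "cmb pn = (\<lambda>y t. (- \<kappa> (snd pn)) * r (fst pn) y t + \<kappa> (fst pn) * r (snd pn) y t)"
    for pn :: "('a \<Rightarrow> ('i \<Rightarrow> real) \<Rightarrow> real) \<times> ('a \<Rightarrow> ('i \<Rightarrow> real) \<Rightarrow> real)"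
  define F' where "F' = r ` {g\<in>F. \<kappa> g = 0} \<union> cmb ` {pn \<in> F \<times> F. \<kappa> (fst pn) > 0 \<and> \<kappa> (snd pn) < 0}"
  have dec: "g y t = r g y t + t i * \<kappa> g" if "g \<in> F" for g y t
    using lin_decomp[of "insert i I" g y t i] L that unfolding r_def \<kappa>_def e_def by auto
  have rl: "lin I (r g)" if "g \<in> F" for g
    using lin_restr[of i I g] L that unfolding r_def by auto
  have "finite F'" unfolding F'_def using fin by (auto intro!: finite_subset[of _ "F \<times> F"])
  moreover have "\<forall>g\<in>F'. lin I g"
  proof
    fix g assume "g \<in> F'"
    then consider (a) h where "h \<in> F" "g = r h"
          | (b) p n where "p \<in> F" "n \<in> F" "g = cmb (p, n)"
      unfolding F'_def by auto
    then show "lin I g"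
    proof cases
      case a then show ?thesis using rl by simp
    next
      case b
      have "lin I (\<lambda>y t. (- \<kappa> n) * r p y t + \<kappa> p * r n y t)"
        by (rule lin_add; rule lin_cmult; rule rl; fact)
      then show ?thesis using b unfolding cmb_def by simp
    qed
  qed
  moreover have "Sys F' = Sys F"
  proof
    show "Sys F \<subseteq> Sys F'"
    proof
      fix y assume "y \<in> Sys F"
      then obtain t where t: "\<forall>g\<in>F. g y t \<le> 0" by (auto simp: Sys_def)
      have "g y t \<le> 0" if "g \<in> F'" for g
      proof -
        from that consider (a) h where "h \<in> F" "\<kappa> h = 0" "g = r h"
          | (b) p n where "p \<in> F" "n \<in> F" "\<kappa> p > 0" "\<kappa> n < 0" "g = cmb (p, n)"
          unfolding F'_def by auto
        then show ?thesis
        proof cases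
          case a then show ?thesis using t dec[of h y t] by auto
        next
          case b
          have "g y t = (- \<kappa> n) * p y t + \<kappa> p * n y t"
            using b dec[of p y t] dec[of n y t] unfolding cmb_def by (simp add: algebra_simps)
          moreover have "p y t \<le> 0" "n y t \<le> 0" using b t by auto
          moreover have "(- \<kappa> n) * p y t \<le> 0" using b calculation(2) mult_nonneg_nonpos[of "- \<kappa> n" "p y t"] by simp
          moreover have "\<kappa> p * n y t \<le> 0" using b calculation(3) mult_nonneg_nonpos[of "\<kappa> p" "n y t"] by simp
          ultimately show ?thesis by simp
        qed
      qed
      then show "y \<in> Sys F'" by (auto simp: Sys_def)
    qed
  next
    show "Sys F' \<subseteq> Sys F"
    proof
      fix y assume "y \<in> Sys F'"
      then obtain t where t: "\<forall>g\<in>F'. g y t \<le> 0" by (auto simp: Sys_def)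
      define lo where "lo n = - r n y t / \<kappa> n" for n
      define Lo where "Lo = lo ` {n\<in>F. \<kappa> n < 0}"
      define Up where "Up = lo ` {p\<in>F. \<kappa> p > 0}"
      have fL: "finite Lo" "finite Up" unfolding Lo_def Up_def using fin by auto
      have LU: "l \<le> u" if lL: "l \<in> Lo" and uU: "u \<in> Up" for l u
      proof -
        obtain n where n: "n \<in> F" "\<kappa> n < 0" "l = lo n" using lL Lo_def by auto
        obtain p where p: "p \<in> F" "\<kappa> p > 0" "u = lo p" using uU Up_def by auto
        have "cmb (p, n) \<in> F'" unfolding F'_def using n p by auto
        then have c: "(- \<kappa> n) * r p y t + \<kappa> p * r n y t \<le> 0" using t unfolding cmb_def by auto
        have "l = r n y t / (- \<kappa> n)" using n lo_def by simp
        moreover have "u = - r p y t / \<kappa> p" using p lo_def by simp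
        moreover have "r n y t / (- \<kappa> n) \<le> - r p y t / \<kappa> p"
        proof -
          have pos: "\<kappa> p * (- \<kappa> n) > 0" using n p by (simp add: mult_pos_neg)
          have "r n y t / (- \<kappa> n) + r p y t / \<kappa> p = ((- \<kappa> n) * r p y t + \<kappa> p * r n y t) / (\<kappa> p * (- \<kappa> n))"
            using n p by (simp add: field_simps)
          also have "\<dots> \<le> 0" by (rule divide_nonpos_pos[OF c pos])
          finally show ?thesis by simp
        qed
        ultimately show ?thesis by simp
      qed
      define s where "s = (if Lo = {} then (if Up = {} then 0 else Min Up) else Max Lo)"
      have sL: "l \<le> s" if "l \<in> Lo" for l using that fL unfolding s_def by auto
      have sU: "s \<le> u" if "u \<in> Up" for u
      proof (cases "Lo = {}")
        case True then show ?thesis using that fL unfolding s_def by auto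
      next
        case False
        then have "Max Lo \<in> Lo" using fL by auto
        then show ?thesis using LU[OF _ that] False unfolding s_def by auto
      qed
      define t' where "t' = t(i := s)"
      have rr: "r g y t' = r g y t" for g unfolding r_def t'_def by simp
      have "g y t' \<le> 0" if g: "g \<in> F" for g
      proof -
        have d: "g y t' = r g y t + s * \<kappa> g" using dec[OF g, of y t'] rr by (simp add: t'_def)
        consider "\<kappa> g = 0" | "\<kappa> g < 0" | "\<kappa> g > 0" by linarith
        then show ?thesis
        proof cases
          case 1
          then have "r g \<in> F'" unfolding F'_def using g by auto
          then show ?thesis using t d 1 by auto
        next
          case 2
          then have "lo g \<in> Lo" unfolding Lo_def using g by auto
          then have "- r g y t / \<kappa> g \<le> s" using sL lo_def by auto
          then have "s * \<kappa> g \<le> (- r g y t / \<kappa> g) * \<kappa> g"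
            using 2 by (intro mult_right_mono_neg) auto
          also have "\<dots> = - r g y t" using 2 by simp
          finally have "- r g y t \<ge> s * \<kappa> g" .
          then show ?thesis using d by simp
        next
          case 3
          then have "lo g \<in> Up" unfolding Up_def using g by auto
          then have "s \<le> - r g y t / \<kappa> g" using sU lo_def by auto
          then have "s * \<kappa> g \<le> (- r g y t / \<kappa> g) * \<kappa> g"
            using 3 by (intro mult_right_mono) auto
          also have "\<dots> = - r g y t" using 3 by simp
          finally have "s * \<kappa> g \<le> - r g y t" .
          then show ?thesis using d by simp
        qed
      qed
      then show "y \<in> Sys F" by (auto simp: Sys_def)
    qed
  qed
  ultimately show ?thesis by blast
qed

lemma Sys_polyhedron:
  fixes F :: "('a::euclidean_space \<Rightarrow> ('i \<Rightarrow> real) \<Rightarrow> real) set"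
  assumes "finite I"
  shows "finite F \<Longrightarrow> \<forall>g\<in>F. lin I g \<Longrightarrow> polyhedron (Sys F)"
  using assms
proof (induction I arbitrary: F rule: finite_induct)
  case empty then show ?case using Sys_base by blast
next
  case (insert i I)
  obtain F' where "finite F'" "\<forall>g\<in>F'. lin I g" "Sys F' = Sys F"
    using Sys_step[OF insert.prems(1,2)] by blast
  then show ?case using insert.IH by metis
qed

lemma Sys_convex_cone:
  fixes F :: "('a::real_vector \<Rightarrow> ('i \<Rightarrow> real) \<Rightarrow> real) set"
  assumes "\<forall>g\<in>F. lin I g"
  shows "convex_cone (Sys F)"
  unfolding convex_cone_iff
proof (intro conjI ballI allI impI)
  have "\<forall>g\<in>F. g 0 (\<lambda>i. 0) \<le> 0" using assms lin_zero by (metis order_refl)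
  then show "0 \<in> Sys F" unfolding Sys_def by blast
next
  fix x y assume "x \<in> Sys F" "y \<in> Sys F"
  then obtain t1 t2 where "\<forall>g\<in>F. g x t1 \<le> 0" "\<forall>g\<in>F. g y t2 \<le> 0" by (auto simp: Sys_def)
  then have "\<forall>g\<in>F. g (x + y) (\<lambda>i. t1 i + t2 i) \<le> 0"
    using assms lin_add' by (metis add_nonpos_nonpos)
  then show "x + y \<in> Sys F" by (auto simp: Sys_def)
next
  fix x and c :: real assume "x \<in> Sys F" "0 \<le> c"
  then obtain t1 where "\<forall>g\<in>F. g x t1 \<le> 0" by (auto simp: Sys_def)
  then have "\<forall>g\<in>F. g (c *\<^sub>R x) (\<lambda>i. c * t1 i) \<le> 0" using assms lin_hom \<open>0 \<le> c\<close>
    by (metis mult_nonneg_nonpos)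
  then show "c *\<^sub>R x \<in> Sys F" by (auto simp: Sys_def)
qed



datatype ('k,'j) ix = IU0 'j | IUN 'j | IQN 'j | IQ0 'j | IX0 'k | IXN 'k | IP0 'k | IPN 'k | ITau nat

definition V :: "('a::finite \<Rightarrow> 'i) \<Rightarrow> ('i \<Rightarrow> real) \<Rightarrow> real^'a" where
  "V f t = (\<chi> a. t (f a))"

lemma V_nth [simp]: "V f t $ a = t (f a)"
  by (simp add: V_def)

lemma lin_y1: "lin I (\<lambda>(y::(real^'k::finite) \<times> (real^'j::finite) \<times> real) t. fst y $ k)"
  by (rule lin_intro) auto
lemma lin_y2: "lin I (\<lambda>(y::(real^'k::finite) \<times> (real^'j::finite) \<times> real) t. fst (snd y) $ j)"
  by (rule lin_intro) auto
lemma lin_y3: "lin I (\<lambda>(y::(real^'k::finite) \<times> (real^'j::finite) \<times> real) t. snd (snd y))"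
  by (rule lin_intro) auto

lemma xtraj_nth: "xtraj x0 xd \<tau> n $ k = x0 $ k + (\<Sum>m\<in>{1..n}. \<tau> m * xd m $ k)"
  by (simp add: xtraj_def)
lemma qtraj_nth: "qtraj qN qd \<tau> N n $ j = qN $ j + (\<Sum>m\<in>{n<..N}. \<tau> m * qd m $ j)"
  by (simp add: qtraj_def)
lemma mv_nth: "(A *v v) $ k = (\<Sum>j\<in>UNIV. A $ k $ j * v $ j)"
  by (simp add: matrix_vector_mult_def)
lemma tmv_nth: "(transpose A *v v) $ j = (\<Sum>k\<in>UNIV. A $ k $ j * v $ k)"
  by (simp add: matrix_vector_mult_def transpose_def)

lemma vm_nth: "(v v* (A::real^'n^'m)) $ j = (\<Sum>k\<in>UNIV. A $ k $ j * v $ k)"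
  unfolding vector_matrix_mult_def by (simp add: mult.commute)

lemmas exp_simps = vm_nth xtraj_nth qtraj_nth mv_nth tmv_nth V_nth
lemmas lin_rules = lin_add lin_diff lin_minus lin_sum lin_cmult lin_multc lin_var lin_y1 lin_y2 lin_y3

lemma ex9:
  "(\<exists>(a::real^'j::finite) (b::real^'j) (c::real^'j) (d::real^'j) (e::real^'k::finite) (f::real^'k) (g::real^'k) (h::real^'k) (\<tau>::nat\<Rightarrow>real). P a b c d e f g h \<tau>)
   \<longleftrightarrow> (\<exists>t::('k,'j) ix \<Rightarrow> real. P (V IU0 t) (V IUN t) (V IQN t) (V IQ0 t) (V IX0 t) (V IXN t) (V IP0 t) (V IPN t) (\<lambda>m. t (ITau m)))"
proof
  assume "\<exists>a b c d e f g h \<tau>. P a b c d e f g h \<tau>"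
  then obtain a b c d e f g h \<tau> where w: "P a b c d e f g h \<tau>" by blast
  define t where "t i = (case i of IU0 j \<Rightarrow> a $ j | IUN j \<Rightarrow> b $ j | IQN j \<Rightarrow> c $ j | IQ0 j \<Rightarrow> d $ j
     | IX0 k \<Rightarrow> e $ k | IXN k \<Rightarrow> f $ k | IP0 k \<Rightarrow> g $ k | IPN k \<Rightarrow> h $ k | ITau m \<Rightarrow> \<tau> m)" for i
  have "V IU0 t = a" "V IUN t = b" "V IQN t = c" "V IQ0 t = d" "V IX0 t = e" "V IXN t = f"
    "V IP0 t = g" "V IPN t = h" "(\<lambda>m. t (ITau m)) = \<tau>"
    by (simp_all add: vec_eq_iff t_def)
  then show "\<exists>t::('k,'j) ix \<Rightarrow> real. P (V IU0 t) (V IUN t) (V IQN t) (V IQ0 t) (V IX0 t) (V IXN t) (V IP0 t) (V IPN t) (\<lambda>m. t (ITau m))"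
    using w by metis
qed blast

lemma exlem: "(\<And>t. (c \<and> P t) \<longleftrightarrow> Q t) \<Longrightarrow> (c \<and> (\<exists>t. P t)) \<longleftrightarrow> (\<exists>t. Q t)"
  by blast

theorem mainTheorem6:
  fixes A :: "real^'j::finite^'k::finite" and b :: "real^'k" and c :: "real^'j"
    and N :: nat and Ks :: "nat \<Rightarrow> 'k set" and Js :: "nat \<Rightarrow> 'j set"
    and u :: "nat \<Rightarrow> real^'j" and xd :: "nat \<Rightarrow> real^'k"
    and p :: "nat \<Rightarrow> real^'k" and qd :: "nat \<Rightarrow> real^'j"
  assumes "base_sequence A b c N Ks Js u xd p qd"
  shows "polyhedron (validity_region A N Ks Js xd qd) \<and> convex_cone (validity_region A N Ks Js xd qd)"
proof -
  define I :: "('k,'j) ix set" where "I = range IU0 \<union> range IUN \<union> range IQN \<union> range IQ0 \<union> range IX0 \<union> range IXN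
     \<union> range IP0 \<union> range IPN \<union> ITau ` {1..N}"
  define S6 where "S6 = {(n,k). n \<in> {1..<N} \<and> Inl k \<in> basic_vars (Ks n) (Js n) - basic_vars (Ks (Suc n)) (Js (Suc n))}"
  define S7 where "S7 = {(n,j). n \<in> {1..<N} \<and> Inr j \<in> basic_vars (Ks n) (Js n) - basic_vars (Ks (Suc n)) (Js (Suc n))}"
  define Z :: "((real^'k) \<times> (real^'j) \<times> real \<Rightarrow> (('k,'j) ix \<Rightarrow> real) \<Rightarrow> real) set" where
    "Z = (\<lambda>k y t. (A *v V IU0 t + V IX0 t - fst y) $ k) ` UNIV
       \<union> (\<lambda>j y t. (transpose A *v V IPN t - V IQN t - fst (snd y)) $ j) ` UNIV
       \<union> (\<lambda>k y t. (A *v V IUN t + V IXN t - xtraj (V IX0 t) xd (\<lambda>m. t (ITau m)) N) $ k) ` UNIV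
       \<union> (\<lambda>j y t. (transpose A *v V IP0 t - V IQ0 t + qtraj (V IQN t) qd (\<lambda>m. t (ITau m)) N 0) $ j) ` UNIV
       \<union> {\<lambda>y t. (\<Sum>n\<in>{1..N}. t (ITau n)) - snd (snd y)}
       \<union> (\<lambda>(n,k) y t. xtraj (V IX0 t) xd (\<lambda>m. t (ITau m)) n $ k) ` S6
       \<union> (\<lambda>(n,j) y t. qtraj (V IQN t) qd (\<lambda>m. t (ITau m)) N n $ j) ` S7
       \<union> (\<lambda>j y t. t (IU0 j)) ` Js 0 \<union> (\<lambda>k y t. t (IX0 k)) ` (- Ks 0)
       \<union> (\<lambda>k y t. t (IP0 k)) ` Ks 0 \<union> (\<lambda>j y t. t (IQ0 j)) ` (- Js 0)
       \<union> (\<lambda>k y t. t (IPN k)) ` Ks (N+1) \<union> (\<lambda>j y t. t (IQN j)) ` (- Js (N+1))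
       \<union> (\<lambda>j y t. t (IUN j)) ` Js (N+1) \<union> (\<lambda>k y t. t (IXN k)) ` (- Ks (N+1))"
  define L :: "((real^'k) \<times> (real^'j) \<times> real \<Rightarrow> (('k,'j) ix \<Rightarrow> real) \<Rightarrow> real) set" where
    "L = (\<lambda>i y t. - t i) ` (range IU0 \<union> range IUN \<union> range IQ0 \<union> range IXN \<union> range IP0 \<union> range IPN \<union> ITau ` {1..N})
       \<union> (\<lambda>(n,k) y t. - (xtraj (V IX0 t) xd (\<lambda>m. t (ITau m)) n $ k)) ` ({..N} \<times> UNIV)
       \<union> (\<lambda>(n,j) y t. - (qtraj (V IQN t) qd (\<lambda>m. t (ITau m)) N n $ j)) ` ({..N} \<times> UNIV)
       \<union> {\<lambda>y t. - snd (snd y)}"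
  define F where "F = Z \<union> (\<lambda>g y t. - g y t) ` Z \<union> L"
  have fI: "finite I" unfolding I_def by auto
  have fS6: "finite S6" unfolding S6_def by (rule finite_subset[of _ "{1..<N} \<times> UNIV"]) auto
  have fS7: "finite S7" unfolding S7_def by (rule finite_subset[of _ "{1..<N} \<times> UNIV"]) auto
  have fF: "finite F" unfolding F_def Z_def L_def using fS6 fS7 by auto
  have linZ: "\<forall>g\<in>Z. lin I g"
    unfolding Z_def using S6_def S7_def
    by (auto simp: exp_simps I_def intro!: lin_rules)
  have linL: "\<forall>g\<in>L. lin I g"
    unfolding L_def
    by (auto simp: exp_simps I_def intro!: lin_rules)
  have linF: "\<forall>g\<in>F. lin I g"
    unfolding F_def using linZ linL by (auto intro: lin_minus)
  have eq: "validity_region A N Ks Js xd qd = Sys F"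
  proof (rule set_eqI)
    fix y :: "(real^'k) \<times> (real^'j) \<times> real"
    obtain \<beta> \<gamma> T where y: "y = (\<beta>,\<gamma>,T)" by (cases y) auto
    have key: "(\<forall>g\<in>F. g y t \<le> 0) \<longleftrightarrow> (\<forall>g\<in>Z. g y t = 0) \<and> (\<forall>g\<in>L. g y t \<le> 0)" for t
    proof
      assume H: "\<forall>g\<in>F. g y t \<le> 0"
      have "g y t = 0" if gZ: "g \<in> Z" for g
      proof -
        have "g \<in> F" "(\<lambda>y t. - g y t) \<in> F" unfolding F_def using gZ by auto
        then have "g y t \<le> 0" "- g y t \<le> 0" using H by auto
        then show ?thesis by simp
      qed
      then show "(\<forall>g\<in>Z. g y t = 0) \<and> (\<forall>g\<in>L. g y t \<le> 0)" using H unfolding F_def by auto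
    qed (auto simp: F_def)
    have pw: "(0 \<le> T \<and> (\<forall>n\<in>{1..<N}.
          (\<forall>k. Inl k \<in> basic_vars (Ks n) (Js n) - basic_vars (Ks (Suc n)) (Js (Suc n))
                \<longrightarrow> xtraj (V IX0 t) xd (\<lambda>m. t (ITau m)) n $ k = 0) \<and>
          (\<forall>j. Inr j \<in> basic_vars (Ks n) (Js n) - basic_vars (Ks (Suc n)) (Js (Suc n))
                \<longrightarrow> qtraj (V IQN t) qd (\<lambda>m. t (ITau m)) N n $ j = 0)) \<and>
       (\<Sum>n\<in>{1..N}. t (ITau n)) = T \<and>
       (\<forall>j\<in>Js 0. V IU0 t $ j = 0) \<and> (\<forall>k. k \<notin> Ks 0 \<longrightarrow> V IX0 t $ k = 0) \<and>
       (\<forall>k\<in>Ks 0. V IP0 t $ k = 0) \<and> (\<forall>j. j \<notin> Js 0 \<longrightarrow> V IQ0 t $ j = 0) \<and>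
       (\<forall>k\<in>Ks (N + 1). V IPN t $ k = 0) \<and> (\<forall>j. j \<notin> Js (N + 1) \<longrightarrow> V IQN t $ j = 0) \<and>
       (\<forall>j\<in>Js (N + 1). V IUN t $ j = 0) \<and> (\<forall>k. k \<notin> Ks (N + 1) \<longrightarrow> V IXN t $ k = 0) \<and>
       A *v V IU0 t + V IX0 t = \<beta> \<and> transpose A *v V IPN t - V IQN t = \<gamma> \<and>
       A *v V IUN t + V IXN t - xtraj (V IX0 t) xd (\<lambda>m. t (ITau m)) N = 0 \<and>
       transpose A *v V IP0 t - V IQ0 t + qtraj (V IQN t) qd (\<lambda>m. t (ITau m)) N 0 = 0 \<and>
       (\<forall>j. 0 \<le> V IU0 t $ j \<and> 0 \<le> V IUN t $ j \<and> 0 \<le> V IQ0 t $ j) \<and>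
       (\<forall>k. 0 \<le> V IXN t $ k \<and> 0 \<le> V IP0 t $ k \<and> 0 \<le> V IPN t $ k) \<and>
       (\<forall>n\<in>{1..N}. 0 \<le> t (ITau n)) \<and>
       (\<forall>n\<le>N. (\<forall>k. 0 \<le> xtraj (V IX0 t) xd (\<lambda>m. t (ITau m)) n $ k) \<and>
          (\<forall>j. 0 \<le> qtraj (V IQN t) qd (\<lambda>m. t (ITau m)) N n $ j)))
      \<longleftrightarrow> (\<forall>g\<in>Z. g y t = 0) \<and> (\<forall>g\<in>L. g y t \<le> 0)" for t
    proof -
      let ?x = "\<lambda>n. xtraj (V IX0 t) xd (\<lambda>m. t (ITau m)) n"
      let ?q = "\<lambda>n. qtraj (V IQN t) qd (\<lambda>m. t (ITau m)) N n"
      have e1: "(\<forall>g\<in>(\<lambda>k y t. (A *v V IU0 t + V IX0 t - fst y) $ k) ` UNIV. g y t = 0) \<longleftrightarrow> A *v V IU0 t + V IX0 t = \<beta>"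
        by (simp add: y vec_eq_iff)
      have e2: "(\<forall>g\<in>(\<lambda>j y t. (transpose A *v V IPN t - V IQN t - fst (snd y)) $ j) ` UNIV. g y t = 0) \<longleftrightarrow> transpose A *v V IPN t - V IQN t = \<gamma>"
        by (simp only: y vec_eq_iff ball_simps image_iff fst_conv snd_conv vector_minus_component) auto
      have e3: "(\<forall>g\<in>(\<lambda>k y t. (A *v V IUN t + V IXN t - xtraj (V IX0 t) xd (\<lambda>m. t (ITau m)) N) $ k) ` UNIV. g y t = 0) \<longleftrightarrow> A *v V IUN t + V IXN t - ?x N = 0"
        by (simp only: vec_eq_iff ball_simps image_iff) auto
      have e4: "(\<forall>g\<in>(\<lambda>j y t. (transpose A *v V IP0 t - V IQ0 t + qtraj (V IQN t) qd (\<lambda>m. t (ITau m)) N 0) $ j) ` UNIV. g y t = 0) \<longleftrightarrow> transpose A *v V IP0 t - V IQ0 t + ?q 0 = 0"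
        by (simp only: vec_eq_iff ball_simps image_iff) auto
      have e5: "(\<forall>g\<in>{\<lambda>y t. (\<Sum>n\<in>{1..N}. t (ITau n)) - snd (snd y)}. g y t = 0) \<longleftrightarrow> (\<Sum>n\<in>{1..N}. t (ITau n)) = T"
        by (simp add: y)
      have e6: "(\<forall>g\<in>(\<lambda>(n,k) y t. xtraj (V IX0 t) xd (\<lambda>m. t (ITau m)) n $ k) ` S6. g y t = 0) \<longleftrightarrow>
          (\<forall>n\<in>{1..<N}. \<forall>k. Inl k \<in> basic_vars (Ks n) (Js n) - basic_vars (Ks (Suc n)) (Js (Suc n)) \<longrightarrow> ?x n $ k = 0)"
        unfolding S6_def by auto
      have e7: "(\<forall>g\<in>(\<lambda>(n,j) y t. qtraj (V IQN t) qd (\<lambda>m. t (ITau m)) N n $ j) ` S7. g y t = 0) \<longleftrightarrow>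
          (\<forall>n\<in>{1..<N}. \<forall>j. Inr j \<in> basic_vars (Ks n) (Js n) - basic_vars (Ks (Suc n)) (Js (Suc n)) \<longrightarrow> ?q n $ j = 0)"
        unfolding S7_def by auto
      have Zc: "(\<forall>g\<in>Z. g y t = 0) \<longleftrightarrow>
         A *v V IU0 t + V IX0 t = \<beta> \<and> transpose A *v V IPN t - V IQN t = \<gamma> \<and>
         A *v V IUN t + V IXN t - ?x N = 0 \<and> transpose A *v V IP0 t - V IQ0 t + ?q 0 = 0 \<and>
         (\<Sum>n\<in>{1..N}. t (ITau n)) = T \<and>
         (\<forall>n\<in>{1..<N}. (\<forall>k. Inl k \<in> basic_vars (Ks n) (Js n) - basic_vars (Ks (Suc n)) (Js (Suc n)) \<longrightarrow> ?x n $ k = 0) \<and>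
         (\<forall>j. Inr j \<in> basic_vars (Ks n) (Js n) - basic_vars (Ks (Suc n)) (Js (Suc n)) \<longrightarrow> ?q n $ j = 0)) \<and>
         (\<forall>j\<in>Js 0. t (IU0 j) = 0) \<and> (\<forall>k\<in>- Ks 0. t (IX0 k) = 0) \<and>
         (\<forall>k\<in>Ks 0. t (IP0 k) = 0) \<and> (\<forall>j\<in>- Js 0. t (IQ0 j) = 0) \<and>
         (\<forall>k\<in>Ks (N+1). t (IPN k) = 0) \<and> (\<forall>j\<in>- Js (N+1). t (IQN j) = 0) \<and>
         (\<forall>j\<in>Js (N+1). t (IUN j) = 0) \<and> (\<forall>k\<in>- Ks (N+1). t (IXN k) = 0)"
        unfolding Z_def ball_Un e1 e2 e3 e4 e5 e6 e7 by (simp only: ball_simps(9) ball_conj_distrib) blast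
      have Lc: "(\<forall>g\<in>L. g y t \<le> 0) \<longleftrightarrow>
         (\<forall>j. 0 \<le> t (IU0 j) \<and> 0 \<le> t (IUN j) \<and> 0 \<le> t (IQ0 j)) \<and>
         (\<forall>k. 0 \<le> t (IXN k) \<and> 0 \<le> t (IP0 k) \<and> 0 \<le> t (IPN k)) \<and>
         (\<forall>n\<in>{1..N}. 0 \<le> t (ITau n)) \<and>
         (\<forall>n\<le>N. (\<forall>k. 0 \<le> ?x n $ k) \<and> (\<forall>j. 0 \<le> ?q n $ j)) \<and> 0 \<le> T"
        unfolding L_def ball_Un by (simp add: y split_paired_Ball_Sigma) blast
      show ?thesis unfolding Zc Lc by (simp only: V_nth Ball_def Compl_iff) argo
    qed
    show "y \<in> validity_region A N Ks Js xd qd \<longleftrightarrow> y \<in> Sys F"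
      unfolding validity_region_def base_seq_optimal_def y Sys_def
      apply (simp only: mem_Collect_eq prod.case ex9)
      apply (rule exlem)
      using pw[unfolded y] key[unfolded y] by simp
  qed
  show ?thesis unfolding eq using Sys_polyhedron[OF fI fF linF] Sys_convex_cone[OF linF] by blast
qed

end
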